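(* In $\mathfrak{sl}_2[[u]]$ let $v=(1+u)^{-1}-1$ and $\mathcal Y_k=(-1)^k(u^k-v^k)h$ ($k\ge0$). Then $\mathcal Y_0=0$ and for every $n\ge1$ $$\mathcal Y_{2n}=\sum_{k\ge n}(-1)^{k-n+1}\frac{(4^{k-n+1}-1)B_{k-n+1}}{k-n+1}\binom{2k}{2n-1}\mathcal Y_{2k+1},$$ the sum converging $u$-adically. Consequently, for every $L\ge1$, the same relation (a finite sum) holds among the images of $Y_k=(-1)^k\big((t-1)^k-(t^{-1}-1)^k\big)h$ in $\mathfrak{OA}/\mathfrak I_{(t-1)^L}$, where $Y_k\mapsto0$ for $k\ge L$.
   Context: $\mathfrak{sl}_2$ over $\mathbb C$ has basis $e,f,h$ with $[e,f]=h$, $[h,e]=2e$, $[h,f]=-2f$; $\mathfrak{sl}_2[[u]]=\mathbb C[[u]]\otimes\mathfrak{sl}_2$. Bernoulli numbers: define $b_j$ by $\frac{x}{e^x-1}=\sum_{j\ge0}b_j\frac{x^j}{j!}$ and set $B_j=(-1)^{j-1}b_{2j}$ for $j\ge1$ (so $B_1=1/6$, $B_2=1/30$). The Onsager algebra is $\mathfrak{OA}=\{p(t)e+p(t^{-1})f+q(t)h:\ p,q\in\mathbb C[t,t^{-1}],\ q(t^{-1})=-q(t)\}\subset\mathbb C[t,t^{-1}]\otimes\mathfrak{sl}_2$, and $\mathfrak I_{(t-1)^L}=\{p(t)e+p(t^{-1})f+q(t)h\in\mathfrak{OA}: p,q\in(t-1)^L\mathbb C[t,t^{-1}]\}$ is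 an ideal. Taylor expansion at $t=1$ ($u=t-1$) embeds $\mathfrak{OA}$ into $\mathfrak{sl}_2[[u]]$, sending $Y_k$ to $\mathcal Y_k$. *)

theory Defs
  imports Complex_Main "HOL-Computational_Algebra.Formal_Power_Series"
          "HOL-Computational_Algebra.Polynomial" "HOL-Library.Product_Plus" "HOL-Library.Function_Algebras"
begin

text \<open>b_j defined by x/(e^x - 1) = sum b_j x^j / j!; here x/(e^x-1) is the inverse of the
  power series (e^x - 1)/x.\<close>
definition bern :: "nat \<Rightarrow> complex" where
  "bern j = fact j * fps_nth (inverse (fps_shift 1 (fps_exp 1 - 1))) j"

definition BB :: "nat \<Rightarrow> complex" where
  "BB j = (-1) ^ (j - 1) * bern (2 * j)"

definition coefY :: "nat \<Rightarrow> nat \<Rightarrow> complex" where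
  "coefY n k = (-1) ^ (k - n + 1) * ((4 ^ (k - n + 1) - 1) * BB (k - n + 1) / of_nat (k - n + 1))
               * of_nat ((2 * k) choose (2 * n - 1))"

text \<open>An element a e + b f + c h with a,b,c in C[[u]] is the triple (a,b,c);
  the u-adic topology is the product of the fps (X-adic) topologies.\<close>
type_synonym sl2fps = "complex fps \<times> complex fps \<times> complex fps"

definition smul_fps :: "complex \<Rightarrow> sl2fps \<Rightarrow> sl2fps" where
  "smul_fps c x = (fps_const c * fst x, fps_const c * fst (snd x), fps_const c * snd (snd x))"

definition vfps :: "complex fps" where
  "vfps = inverse (1 + fps_X) - 1"

definition Yu :: "nat \<Rightarrow> sl2fps" where
  "Yu k = (0, 0, (-1) ^ k * (fps_X ^ k - vfps ^ k))"

text \<open>A function on C is (represents) a Laurent polynomial if on C - {0} it equals p(t)/t^N.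
  Elements p(t) e + p'(t) f + q(t) h are triples of functions, only their values at t \<noteq> 0 matter.\<close>
definition laurent :: "(complex \<Rightarrow> complex) \<Rightarrow> bool" where
  "laurent f \<longleftrightarrow> (\<exists>(p::complex poly) (N::nat). \<forall>t. t \<noteq> 0 \<longrightarrow> f t = poly p t / t ^ N)"

type_synonym loopel = "(complex \<Rightarrow> complex) \<times> (complex \<Rightarrow> complex) \<times> (complex \<Rightarrow> complex)"

definition OA :: "loopel set" where
  "OA = {x. \<exists>p q. laurent p \<and> laurent q \<and> (\<forall>t. t \<noteq> 0 \<longrightarrow> q (1 / t) = - q t) \<and>
          (\<forall>t. t \<noteq> 0 \<longrightarrow> fst x t = p t \<and> fst (snd x) t = p (1 / t) \<and> snd (snd x) t = q t)}"

definition divisible_by_pow :: "nat \<Rightarrow> (complex \<Rightarrow> complex) \<Rightarrow> bool" where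
  "divisible_by_pow L p \<longleftrightarrow> (\<exists>r. laurent r \<and> (\<forall>t. t \<noteq> 0 \<longrightarrow> p t = (t - 1) ^ L * r t))"

definition ideal_I :: "nat \<Rightarrow> loopel set" where
  "ideal_I L = {x. \<exists>p q. laurent p \<and> laurent q \<and> (\<forall>t. t \<noteq> 0 \<longrightarrow> q (1 / t) = - q t) \<and>
          divisible_by_pow L p \<and> divisible_by_pow L q \<and>
          (\<forall>t. t \<noteq> 0 \<longrightarrow> fst x t = p t \<and> fst (snd x) t = p (1 / t) \<and> snd (snd x) t = q t)}"

definition smul_loop :: "complex \<Rightarrow> loopel \<Rightarrow> loopel" where
  "smul_loop c x = ((\<lambda>t. c * fst x t), (\<lambda>t. c * fst (snd x) t), (\<lambda>t. c * snd (snd x) t))"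

definition YO :: "nat \<Rightarrow> loopel" where
  "YO k = ((\<lambda>t. 0), (\<lambda>t. 0), (\<lambda>t. (-1) ^ k * ((t - 1) ^ k - (1 / t - 1) ^ k)))"

definition cong_mod_I :: "nat \<Rightarrow> loopel \<Rightarrow> loopel \<Rightarrow> bool" where
  "cong_mod_I L x y \<longleftrightarrow> x - y \<in> ideal_I L"

end

theory Submission
  imports Defs "HOL-Computational_Algebra.Polynomial_FPS"
begin
unbundle fps_syntax

definition E1 :: "complex fps" where "E1 = fps_shift 1 (fps_exp 1 - 1)"
definition bt :: "complex fps" where "bt = inverse E1"

lemma E1_0: "E1 $ 0 = 1" by (simp add: E1_def)
lemma E1_1: "E1 $ Suc 0 = 1/2" by (simp add: E1_def)
lemma X_E1: "fps_X * E1 = fps_exp 1 - 1"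
  by (rule fps_ext) (auto simp: E1_def fps_X_mult_nth)
lemma bt_E1: "bt * E1 = 1" unfolding bt_def by (rule inverse_mult_eq_1) (simp add: E1_0)
lemma bt_E: "bt * (fps_exp 1 - 1) = fps_X"
  by (metis X_E1 bt_E1 mult.left_commute mult.right_neutral)
lemma bt0: "bt $ 0 = 1" by (simp add: bt_def E1_0)
lemma bt1: "bt $ Suc 0 = -1/2"
proof -
  have "(bt * E1) $ 1 = 0" by (simp add: bt_E1)
  then have h: "1/2 + bt $ Suc 0 = 0" by (simp add: fps_mult_nth_1 bt0 E1_0 E1_1)
  have "bt $ Suc 0 = (1/2 + bt $ Suc 0) - 1/2" by simp
  then show ?thesis using h by simp
qed

abbreviation EE :: "complex fps" where "EE \<equiv> fps_exp 1"
definition bt2 :: "complex fps" where "bt2 = bt oo (fps_const 2 * fps_X)"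

lemma EE2: "fps_exp 2 = EE * EE"
  using fps_exp_add_mult[of "1::complex" 1] by simp

lemma bt2_E: "bt2 * (EE * EE - 1) = 2 * fps_X"
proof -
  have "(bt * (fps_exp 1 - 1)) oo (fps_const 2 * fps_X) = fps_X oo (fps_const 2 * fps_X)"
    by (simp add: bt_E)
  then have "bt2 * (fps_exp 2 - 1) = fps_const 2 * fps_X"
    unfolding bt2_def by (simp add: fps_compose_mult_distrib fps_compose_sub_distrib)
  then show ?thesis by (simp add: EE2 fps_numeral_fps_const)
qed

lemma EEm1_nz: "EE - 1 \<noteq> 0"
proof
  assume "EE - 1 = 0"
  then have "(EE - 1) $ 1 = 0" by simp
  then show False by simp
qed

lemma EEp1_nz: "EE + 1 \<noteq> 0"
proof
  assume "EE + 1 = 0"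
  then have "(EE + 1) $ 0 = 0" by simp
  then show False by simp
qed

lemma bt2_Ep: "bt2 * (EE + 1) = 2 * bt"
proof -
  have "(bt2 * (EE + 1) - 2 * bt) * (EE - 1) = bt2 * (EE * EE - 1) - 2 * (bt * (EE - 1))"
    by (simp add: algebra_simps)
  also have "\<dots> = 0" by (simp add: bt2_E bt_E)
  finally show ?thesis using EEm1_nz by simp
qed

definition WW :: "complex fps" where "WW = 2 * fps_X - 2 * bt + 2 * bt2"
definition TT :: "complex fps" where "TT = fps_shift 1 WW"

lemma WW_E: "WW * (EE + 1) = 2 * fps_X * EE"
proof -
  have 1: "bt * EE = fps_X + bt" using bt_E by (simp add: algebra_simps)
  have 2: "bt2 * EE = 2 * bt - bt2" using bt2_Ep by (simp add: algebra_simps)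
  have "WW * (EE + 1) = 2*fps_X*EE + 2*fps_X - 2*(bt*EE) - 2*bt + 2*(bt2*EE) + 2*bt2"
    by (simp add: WW_def algebra_simps)
  also have "\<dots> = 2 * fps_X * EE" by (simp only: 1 2) (simp add: algebra_simps)
  finally show ?thesis .
qed

lemma WW0: "WW $ 0 = 0" by (simp add: WW_def bt2_def bt0)

lemma X_TT: "fps_X * TT = WW"
  by (rule fps_ext) (auto simp: TT_def fps_X_mult_nth WW0)

lemma TT_E: "TT * (EE + 1) = 2 * EE"
proof -
  have "fps_X * (TT * (EE + 1)) = (fps_X * TT) * (EE + 1)" by (simp only: mult.assoc)
  also have "\<dots> = 2 * fps_X * EE" by (simp only: X_TT WW_E)
  also have "\<dots> = fps_X * (2 * EE)" by (simp only: mult.assoc mult.left_commute)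
  finally have "fps_X * (TT * (EE + 1)) = fps_X * (2 * EE)" .
  then show ?thesis by simp
qed

definition RT :: "complex fps" where "RT = TT oo (- fps_X)"

lemma EE_neg: "EE * fps_exp (-1) = 1"
  using fps_exp_add_mult[of "1::complex" "-1"] by simp

lemma RT_E: "RT * (1 + EE) = 2"
proof -
  have "(TT * (EE + 1)) oo (- fps_X) = (2 * EE) oo (- fps_X)" by (simp add: TT_E)
  then have "RT * (fps_exp (-1) + 1) = 2 * fps_exp (-1)"
    unfolding RT_def by (simp add: fps_compose_mult_distrib fps_compose_add_distrib)
  then have "EE * (RT * (fps_exp (-1) + 1)) = EE * (2 * fps_exp (-1))" by simp
  then show ?thesis using EE_neg by (simp add: algebra_simps)
qed

lemma EE_RT: "EE * RT = TT"
proof -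
  have "(EE * RT - TT) * (EE + 1) = EE * (RT * (1 + EE)) - TT * (EE + 1)"
    by (simp add: algebra_simps)
  also have "\<dots> = 0" by (simp add: RT_E TT_E)
  finally show ?thesis using EEp1_nz by simp
qed

lemma TT_RT: "TT + RT = 2"
proof -
  have "(TT + RT) * (EE + 1) = TT * (EE + 1) + RT * (1 + EE)"
    by (simp add: algebra_simps)
  also have "\<dots> = 2 * EE + 2" by (simp only: TT_E RT_E)
  also have "\<dots> = 2 * (EE + 1)" by (simp add: algebra_simps)
  finally have "(TT + RT) * (EE + 1) = 2 * (EE + 1)" .
  then show ?thesis by (metis EEp1_nz mult_right_cancel)
qed

lemma RT_nth: "RT $ m = (-1)^m * TT $ m"
  by (simp add: RT_def fps_compose_uminus')

lemma nth_times2 [simp]: "(f * (2::complex fps)) $ n = 2 * f $ n"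
  by (simp add: fps_numeral_fps_const)
lemma nth_2times [simp]: "((2::complex fps) * f) $ n = 2 * f $ n"
  by (simp add: fps_numeral_fps_const)

lemma bt2_nth: "bt2 $ n = 2^n * bt $ n"
  unfolding bt2_def by (rule fps_nth_compose_linear)

lemma TT_nth: "TT $ m = 2 * (if m = 0 then 1 else 0) + 2 * (2 ^ Suc m - 1) * bt $ Suc m"
  by (simp add: TT_def WW_def bt2_nth fps_numeral_nth algebra_simps)

lemma TT0: "TT $ 0 = 1"
  by (simp add: TT_nth bt1)

lemma TT_even: "i \<ge> 1 \<Longrightarrow> TT $ (2 * i) = 0"
proof -
  assume "i \<ge> 1"
  have "(TT + RT) $ (2*i) = 2 $ (2*i)" by (simp add: TT_RT)
  then show ?thesis using \<open>i \<ge> 1\<close> by (simp add: RT_nth fps_numeral_nth)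
qed


definition FF :: "nat \<Rightarrow> complex fps" where "FF i = fps_X ^ i * TT"
definition gg :: "nat \<Rightarrow> nat \<Rightarrow> complex" where "gg i m = fact m * FF i $ m"

lemma FF_refl: assumes "odd i" shows "(FF i oo - fps_X) * EE = - FF i"
proof -
  have "fps_X ^ i oo - fps_X = (fps_X oo - fps_X :: complex fps) ^ i"
    by (simp add: fps_compose_power[symmetric])
  then have "FF i oo - fps_X = (fps_X oo - fps_X) ^ i * RT"
    unfolding FF_def RT_def by (simp add: fps_compose_mult_distrib)
  also have "\<dots> = - (fps_X ^ i * RT)" using assms by (simp add: power_minus_odd)
  finally have "(FF i oo - fps_X) * EE = - (fps_X ^ i * (EE * RT))" by (simp add: algebra_simps)
  then show ?thesis by (simp add: EE_RT FF_def)
qed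

lemma gg_binom: assumes "odd i"
  shows "(\<Sum>m=0..M. of_nat (M choose m) * (-1)^m * gg i m) = - gg i M"
proof -
  have "((FF i oo - fps_X) * EE) $ M = (- FF i) $ M" by (simp add: FF_refl assms)
  then have "(\<Sum>m=0..M. (-1)^m * FF i $ m * (1 / fact (M - m))) = - FF i $ M"
    by (simp add: fps_mult_nth fps_compose_uminus')
  then have "fact M * (\<Sum>m=0..M. (-1)^m * FF i $ m * (1 / fact (M - m))) = fact M * (- FF i $ M)"
    by simp
  moreover have "fact M * (\<Sum>m=0..M. (-1)^m * FF i $ m * (1 / fact (M - m))) =
      (\<Sum>m=0..M. of_nat (M choose m) * (-1)^m * gg i m)"
    unfolding sum_distrib_left
  proof (rule sum.cong)
    fix m assume "m \<in> {0..M}"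
    then have "m \<le> M" by simp
    then show "fact M * ((-1)^m * FF i $ m * (1 / fact (M - m))) =
        of_nat (M choose m) * (-1)^m * gg i m"
      by (simp add: binomial_fact gg_def field_simps)
  qed simp
  ultimately show ?thesis by (simp add: gg_def)
qed

definition yy :: "nat \<Rightarrow> complex fps" where "yy m = snd (snd (Yu m))"

lemma yy_def': "yy m = (-1)^m * (fps_X ^ m - vfps ^ m)"
  by (simp add: yy_def Yu_def)

lemma vfps_mult: "vfps * (1 + fps_X) = - fps_X"
proof -
  have "inverse (1 + fps_X :: complex fps) * (1 + fps_X) = 1"
    by (rule inverse_mult_eq_1) simp
  then show ?thesis by (simp add: vfps_def algebra_simps)
qed

lemma vfps_pow: "vfps ^ m = (- fps_X) ^ m * inverse ((1 + fps_X) ^ m)"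
proof -
  have "(1 + fps_X :: complex fps) ^ m * inverse ((1 + fps_X) ^ m) = 1"
    by (rule inverse_mult_eq_1') simp
  then have "vfps ^ m = vfps ^ m * ((1 + fps_X) ^ m * inverse ((1 + fps_X) ^ m))" by simp
  also have "\<dots> = (vfps * (1 + fps_X)) ^ m * inverse ((1 + fps_X) ^ m)"
    by (simp add: power_mult_distrib mult.assoc)
  finally show ?thesis by (simp add: vfps_mult)
qed

lemma inv_pow_nth: assumes "m \<ge> 1"
  shows "inverse ((1 + fps_X :: complex fps) ^ m) $ j = (-1)^j * of_nat ((m + j - 1) choose j)"
proof -
  have "inverse ((1 + fps_X :: complex fps) ^ m) $ j = (- of_nat m) gchoose j"
    by (simp add: fps_binomial_minus_of_nat [symmetric])
  also have "\<dots> = (-1)^j * ((of_nat m + of_nat j - 1) gchoose j)"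
    by (rule gbinomial_minus)
  also have "(of_nat m + of_nat j - 1 :: complex) = of_nat (m + j - 1)"
    using assms by (simp add: of_nat_diff)
  finally show ?thesis by (simp add: binomial_gbinomial)
qed

lemma yy_alt: "yy m = (-1)^m * fps_X ^ m - fps_X ^ m * inverse ((1 + fps_X) ^ m)"
proof -
  have "(-1::complex fps)^m * (-1)^m = 1" by (simp add: power_mult_distrib[symmetric])
  then show ?thesis unfolding yy_def' vfps_pow power_minus[of fps_X]
    by (simp add: algebra_simps)
qed

lemma yy_nth: assumes "m \<ge> 1"
  shows "yy m $ N = (-1)^m * (if N = m then 1 else 0)
     - (if m \<le> N then (-1)^(N-m) * of_nat ((N - 1) choose (N - m)) else 0)"
proof -
  have "((-1::complex fps)^m * fps_X ^ m) $ N = (-1)^m * (if N = m then 1 else 0)"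
  proof -
    have "(-1::complex fps) = fps_const (-1)" by (metis fps_const_neg fps_const_1_eq_1)
    then have c: "(-1::complex fps)^m = fps_const ((-1)^m)"
      by (simp only: fps_const_power)
    show ?thesis unfolding c by (simp add: fps_X_power_nth)
  qed
  moreover have "(fps_X ^ m * inverse ((1 + fps_X :: complex fps) ^ m)) $ N =
      (if m \<le> N then (-1)^(N-m) * of_nat ((N - 1) choose (N - m)) else 0)"
    using assms by (simp add: fps_X_power_mult_nth inv_pow_nth)
  ultimately show ?thesis by (simp add: yy_alt)
qed


lemma zsum: assumes "odd i"
  shows "(\<Sum>m<N. gg i m * yy (m+1) $ N) = 0"
proof (cases N)
  case 0 then show ?thesis by simp
next
  case (Suc M)
  have sgn: "(-1::complex)^(M-m) = (-1)^M * (-1)^m" if "m \<le> M" for m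
  proof -
    have "(-1::complex)^M = (-1)^(M-m) * (-1)^m" using that by (simp add: power_add[symmetric])
    then have "(-1::complex)^M * (-1)^m = (-1)^(M-m) * ((-1)^m * (-1)^m)" by (simp add: algebra_simps)
    also have "(-1::complex)^m * (-1)^m = 1" by (simp add: power_add[symmetric])
    finally show ?thesis by simp
  qed
  have eq: "gg i m * yy (m+1) $ Suc M = (if m = M then (-1)^(M+1) * gg i M else 0)
      - (-1)^M * (of_nat (M choose m) * (-1)^m * gg i m)" if "m \<in> {0..M}" for m
  proof -
    have mM: "m \<le> M" using that by simp
    have yv: "yy (m+1) $ Suc M = (-1)^(m+1) * (if M = m then 1 else 0)
       - (-1)^(M-m) * of_nat (M choose m)"
      using mM by (simp add: yy_nth binomial_symmetric[symmetric])
    have sq: "(-1::complex)^M * (-1)^M = 1" by (simp add: power_add[symmetric])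
    show ?thesis unfolding yv using mM by (cases "m = M") (simp_all add: sgn algebra_simps sq)
  qed
  have "(\<Sum>m<N. gg i m * yy (m+1) $ N) = (\<Sum>m=0..M. gg i m * yy (m+1) $ Suc M)"
    using Suc by (simp add: lessThan_Suc_atMost atLeast0AtMost)
  also have "\<dots> = (\<Sum>m=0..M. (if m = M then (-1)^(M+1) * gg i M else 0)
      - (-1)^M * (of_nat (M choose m) * (-1)^m * gg i m))"
    by (rule sum.cong[OF refl]) (rule eq)
  also have "\<dots> = (-1)^(M+1) * gg i M - (-1)^M * (\<Sum>m=0..M. of_nat (M choose m) * (-1)^m * gg i m)"
    by (simp add: sum_subtractf sum_distrib_left)
  also have "\<dots> = 0" by (simp add: gg_binom assms)
  finally show ?thesis .
qed

lemma bern_bt: "bern j = fact j * bt $ j"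
  by (simp add: bern_def bt_def E1_def)

lemma gg_lt: "m < i \<Longrightarrow> gg i m = 0"
  by (simp add: gg_def FF_def fps_X_power_mult_nth)

lemma gg_i: "gg i i = fact i"
  by (simp add: gg_def FF_def fps_X_power_mult_nth TT0)

lemma gg_odd: assumes "n \<ge> 1" shows "gg (2*n-1) (2*n + 2*j + 1) = 0"
proof -
  have "2*n + 2*j + 1 - (2*n-1) = 2 * (j+1)" using assms by simp
  then show ?thesis using assms TT_even[of "j+1"] by (simp add: gg_def FF_def fps_X_power_mult_nth)
qed

lemma alg_aux:
  fixes s1 s2 J Q R P a b :: complex
  assumes "s1 * s2 = -1" "J \<noteq> 0" "Q \<noteq> 0" "R \<noteq> 0"
  shows "P * (2 * a * b) = - Q * (s1 * (a * (s2 * (2 * J * R * b)) / J) * (P / (Q * R)))"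
proof -
  have "- Q * (s1 * (a * (s2 * (2 * J * R * b)) / J) * (P / (Q * R)))
      = - (s1 * s2) * (Q / Q) * (R / R) * (J / J) * (P * (2 * a * b))"
    by (simp add: field_simps)
  also have "\<dots> = P * (2 * a * b)" using assms by simp
  finally show ?thesis by simp
qed

lemma gg_even: assumes "n \<ge> 1"
  shows "gg (2*n-1) (2*(n+j)) = - fact (2*n-1) * coefY n (n+j)"
proof -
  have d: "2*(n+j) - (2*n-1) = 2*j+1" using assms by simp
  have le: "2*n-1 \<le> 2*(n+j)" by simp
  have sg: "(-1::complex)^(j+1) * (-1)^(j+1-1) = -1"
    by (simp add: power_add[symmetric] mult_2[symmetric] power_mult)
  have "(2::complex) ^ (2*j+2) = (2^2)^(j+1)"
    unfolding power_mult[symmetric] by (simp add: algebra_simps)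
  then have p4: "(2::complex) ^ Suc (2*j+1) = 4^(j+1)" by simp
  have TTv: "TT $ Suc (2*j) = 2 * (4^(j+1) - 1) * bt $ Suc (Suc (2*j))"
    using TT_nth[of "2*j+1", unfolded p4] by simp
  have kn: "n + j - n + 1 = j + 1" by simp
  have f2: "fact (2*(j+1)) = 2 * (of_nat (j+1) :: complex) * fact (2*j+1)"
    by (simp add: fact_Suc algebra_simps)
  have bin: "(of_nat ((2*(n+j)) choose (2*n-1)) :: complex) = fact (2*(n+j)) / (fact (2*n-1) * fact (2*j+1))"
    using binomial_fact[OF le] d by simp
  have lhs: "gg (2*n-1) (2*(n+j)) = fact (2*(n+j)) * (2 * (4^(j+1) - 1) * bt $ (2*(j+1)))"
    unfolding gg_def FF_def using le d by (simp add: fps_X_power_mult_nth TTv)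
  have c: "coefY n (n+j) = (-1)^(j+1) * ((4^(j+1) - 1) * ((-1)^(j+1-1) * (fact (2*(j+1)) * bt $ (2*(j+1)))) / of_nat (j+1))
      * of_nat ((2*(n+j)) choose (2*n-1))"
    by (simp only: coefY_def BB_def bern_bt kn)
  have J: "(of_nat (j+1)::complex) \<noteq> 0" by (simp only: of_nat_eq_0_iff)
  have R: "(fact (2*j+1)::complex) \<noteq> 0" by (rule fact_nonzero)
  have Q: "(fact (2*n-1)::complex) \<noteq> 0" by (rule fact_nonzero)
  show ?thesis unfolding lhs c f2 bin
    by (rule alg_aux[OF sg J Q R])
qed

lemma psum: assumes "n \<ge> 1"
  shows "(\<Sum>m<2*n+2*J. gg (2*n-1) m * z m) =
     fact (2*n-1) * (z (2*n-1) - (\<Sum>j<J. coefY n (n+j) * z (2*(n+j))))"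
proof (induction J)
  case 0
  have s: "2*n + 2*0 = Suc (2*n-1)" using assms by simp
  have "(\<Sum>m<2*n-1. gg (2*n-1) m * z m) = 0" by (simp add: gg_lt)
  then show ?case unfolding s by (simp add: gg_i)
next
  case (Suc J)
  have s: "2*n + 2*Suc J = Suc (Suc (2*n+2*J))" by simp
  have "(\<Sum>m<2*n+2*Suc J. gg (2*n-1) m * z m) = (\<Sum>m<2*n+2*J. gg (2*n-1) m * z m)
     + gg (2*n-1) (2*(n+J)) * z (2*(n+J)) + gg (2*n-1) (2*n+2*J+1) * z (2*n+2*J+1)"
    unfolding s by (simp add: algebra_simps)
  also have "\<dots> = fact (2*n-1) * (z (2*n-1) - (\<Sum>j<Suc J. coefY n (n+j) * z (2*(n+j))))"
    unfolding Suc.IH gg_even[OF assms] gg_odd[OF assms] by (simp add: algebra_simps)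
  finally show ?case .
qed


lemma yy_vanish: "N < m \<Longrightarrow> yy m $ N = 0"
  by (simp add: yy_nth)

lemma coeff_id: assumes "n \<ge> 1" "N \<le> 2*n+2*J"
  shows "yy (2*n) $ N = (\<Sum>j<J. coefY n (n+j) * yy (2*(n+j)+1) $ N)"
proof -
  define z where "z m = yy (m+1) $ N" for m
  have "(\<Sum>m<2*n+2*J. gg (2*n-1) m * z m) = (\<Sum>m<N. gg (2*n-1) m * z m)"
    by (rule sum.mono_neutral_right) (use assms in \<open>auto simp: z_def yy_vanish\<close>)
  also have "\<dots> = 0" unfolding z_def by (rule zsum) (use assms in auto)
  finally have "fact (2*n-1) * (z (2*n-1) - (\<Sum>j<J. coefY n (n+j) * z (2*(n+j)))) = 0"
    using psum[OF assms(1)] by simp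
  then have "z (2*n-1) = (\<Sum>j<J. coefY n (n+j) * z (2*(n+j)))" by simp
  moreover have "2*n-1+1 = 2*n" using assms by simp
  ultimately show ?thesis by (simp add: z_def)
qed

lemma sums_third: assumes "n \<ge> 1"
  shows "(\<lambda>j. fps_const (coefY n (n+j)) * yy (2*(n+j)+1)) sums yy (2*n)"
  unfolding sums_def
proof (rule tendsto_fpsI)
  fix N
  show "\<forall>\<^sub>F J in sequentially. (\<Sum>j<J. fps_const (coefY n (n+j)) * yy (2*(n+j)+1)) $ N = yy (2*n) $ N"
    unfolding eventually_sequentially
  proof (intro exI allI impI)
    fix J assume "N \<le> J"
    then have "N \<le> 2*n+2*J" by simp
    then show "(\<Sum>j<J. fps_const (coefY n (n+j)) * yy (2*(n+j)+1)) $ N = yy (2*n) $ N"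
      using coeff_id[OF assms] by (simp add: fps_sum_nth)
  qed
qed

lemma sums_triple: assumes "(h :: nat \<Rightarrow> complex fps) sums y"
  shows "(\<lambda>j. ((0::complex fps), (0::complex fps), h j)) sums (0, 0, y)"
  using assms unfolding sums_def sum_prod by (intro tendsto_Pair tendsto_const) simp_all

lemma part_sums: assumes "n \<ge> 1"
  shows "(\<lambda>j. smul_fps (coefY n (n + j)) (Yu (2 * (n + j) + 1))) sums Yu (2 * n)"
proof -
  have "(\<lambda>j. smul_fps (coefY n (n + j)) (Yu (2 * (n + j) + 1))) =
      (\<lambda>j. ((0::complex fps), (0::complex fps), fps_const (coefY n (n+j)) * yy (2*(n+j)+1)))"
    by (simp add: smul_fps_def yy_def Yu_def)
  moreover have "Yu (2*n) = (0, 0, yy (2*n))" by (simp add: yy_def Yu_def)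
  ultimately show ?thesis using sums_triple[OF sums_third[OF assms]] by simp
qed

lemma part_zero: "Yu 0 = 0"
  by (simp add: Yu_def zero_prod_def)


lemma sum_fun_apply: "(\<Sum>k\<in>A. (f k :: 'a \<Rightarrow> 'b::comm_monoid_add)) t = (\<Sum>k\<in>A. f k t)"
  by (induction A rule: infinite_finite_induct) auto

lemma laurent_shift: "laurent (\<lambda>t. poly P (t - 1) / t ^ M)"
  unfolding laurent_def
  by (rule exI[of _ "pcompose P [:-1, 1:]"], rule exI[of _ M]) (simp add: poly_pcompose)

lemma laurent_cong: "laurent f \<Longrightarrow> (\<And>t. t \<noteq> 0 \<Longrightarrow> g t = f t) \<Longrightarrow> laurent g"
  unfolding laurent_def by metis

lemma div_shift: assumes "\<And>N. N < L \<Longrightarrow> coeff P N = 0"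
  shows "divisible_by_pow L (\<lambda>t. poly P (t - 1) / t ^ M)"
proof -
  have "monom 1 L dvd P" using assms by (simp add: monom_1_dvd_iff')
  then obtain R where R: "P = monom 1 L * R" by (elim dvdE)
  show ?thesis unfolding divisible_by_pow_def
    by (rule exI[of _ "\<lambda>t. poly R (t - 1) / t ^ M"]) (simp add: laurent_shift R poly_monom)
qed

lemma div_cong: "divisible_by_pow L f \<Longrightarrow> (\<And>t. t \<noteq> 0 \<Longrightarrow> g t = f t) \<Longrightarrow> divisible_by_pow L g"
  unfolding divisible_by_pow_def by metis

lemma in_ideal: 
  assumes "\<And>t. fst x t = 0" "\<And>t. fst (snd x) t = 0"
    and "laurent (snd (snd x))" "divisible_by_pow L (snd (snd x))"
    and "\<And>t. t \<noteq> 0 \<Longrightarrow> snd (snd x) (1 / t) = - snd (snd x) t"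
  shows "x \<in> ideal_I L"
  unfolding ideal_I_def
proof (intro CollectI exI conjI allI impI)
  show "laurent (\<lambda>t. 0)" unfolding laurent_def by (rule exI[of _ 0], rule exI[of _ 0]) simp
  show "divisible_by_pow L (\<lambda>t. 0)" unfolding divisible_by_pow_def
    by (rule exI[of _ "\<lambda>t. 0"]) (simp add: \<open>laurent (\<lambda>t. 0)\<close>)
qed (use assms in auto)

definition Qp :: "nat \<Rightarrow> nat \<Rightarrow> complex poly" where
  "Qp M k = smult ((-1)^k) ([:0,1:]^k * [:1,1:]^M) - [:0,1:]^k * [:1,1:]^(M-k)"

definition yo :: "nat \<Rightarrow> complex \<Rightarrow> complex" where
  "yo k = snd (snd (YO k))"

lemma yo_eq: "yo k t = (-1) ^ k * ((t - 1) ^ k - (1 / t - 1) ^ k)"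
  by (simp add: yo_def YO_def)

lemma Qp_eval: assumes "t \<noteq> 0" "k \<le> M"
  shows "poly (Qp M k) (t - 1) / t ^ M = yo k t"
proof -
  have tM: "t ^ M = t ^ (M - k) * t ^ k" using assms(2) by (simp add: power_add[symmetric])
  have a: "(-1::complex) ^ k * (1 / t - 1) ^ k = (t - 1) ^ k / t ^ k"
  proof -
    have "(-1::complex) ^ k * (1 / t - 1) ^ k = ((-1) * (1 / t - 1)) ^ k" by (rule power_mult_distrib[symmetric])
    also have "(-1) * (1 / t - 1) = (t - 1) / t" using assms(1) by (simp add: field_simps)
    finally show ?thesis by (simp add: power_divide)
  qed
  have "poly (Qp M k) (t - 1) = (-1)^k * ((t - 1)^k * t^M) - (t - 1)^k * t^(M-k)"
    by (simp add: Qp_def)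
  also have "\<dots> / t ^ M = (-1)^k * (t - 1)^k - (t - 1)^k / t^k"
    unfolding tM using assms(1) by (simp add: field_simps)
  also have "\<dots> = yo k t" by (simp only: yo_eq right_diff_distrib a)
  finally show ?thesis .
qed

lemma Qp_fps: assumes "k \<le> M"
  shows "fps_of_poly (Qp M k) = (1 + fps_X) ^ M * yy k"
proof -
  have pw: "(1 + fps_X :: complex fps) ^ M = (1 + fps_X) ^ (M - k) * (1 + fps_X) ^ k"
    using assms by (simp add: power_add[symmetric])
  have v: "(1 + fps_X) ^ M * vfps ^ k = (1 + fps_X) ^ (M - k) * (- fps_X) ^ k"
  proof -
    have "(1 + fps_X) ^ M * vfps ^ k = (1 + fps_X) ^ (M - k) * (vfps * (1 + fps_X)) ^ k"
      unfolding pw power_mult_distrib by (simp only: mult_ac)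
    then show ?thesis by (simp only: vfps_mult)
  qed
  have s: "(-1::complex fps)^k * (-1)^k = 1" by (simp add: power_add[symmetric])
  have "(1 + fps_X) ^ M * yy k = (-1)^k * (fps_X ^ k * (1 + fps_X) ^ M) - (-1)^k * ((1 + fps_X) ^ M * vfps ^ k)"
    by (simp add: yy_def' algebra_simps)
  also have "\<dots> = (-1)^k * (fps_X ^ k * (1 + fps_X) ^ M) - fps_X ^ k * (1 + fps_X) ^ (M - k)"
    unfolding v power_minus[of "fps_X :: complex fps"] by (simp add: mult.assoc[symmetric] s)
  finally have e: "(1 + fps_X) ^ M * yy k = (-1)^k * (fps_X ^ k * (1 + fps_X) ^ M) - fps_X ^ k * (1 + fps_X) ^ (M - k)" .
  have c: "fps_const ((-1::complex)^k) = (-1)^k"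
    by (metis fps_const_1_eq_1 fps_const_neg fps_const_power)
  have l: "fps_of_poly [:1, 1:] = (1 + fps_X :: complex fps)"
    using fps_of_poly_linear'[of "1::complex"] by simp
  show ?thesis unfolding e Qp_def
    by (simp add: fps_of_poly_diff fps_of_poly_smult fps_of_poly_mult fps_of_poly_power l c)
qed

lemma mult_low_zero: assumes "\<And>i. i < L \<Longrightarrow> (D::complex fps) $ i = 0" "N < L"
  shows "(A * D) $ N = 0"
  unfolding fps_mult_nth using assms by (intro sum.neutral) auto


lemma yo_anti: "t \<noteq> 0 \<Longrightarrow> yo k (1 / t) = - yo k t"
  by (simp add: yo_eq algebra_simps)

lemma part_C1: assumes "L \<le> k" shows "cong_mod_I L (YO k) 0"
  unfolding cong_mod_I_def diff_zero
proof (rule in_ideal)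
  have ev: "yo k t = poly (Qp k k) (t - 1) / t ^ k" if "t \<noteq> 0" for t
    using Qp_eval[OF that order_refl] by simp
  show "laurent (snd (snd (YO k)))" unfolding yo_def[symmetric]
    by (rule laurent_cong[OF laurent_shift]) (rule ev)
  have cz: "coeff (Qp k k) N = 0" if "N < L" for N
  proof -
    have "coeff (Qp k k) N = ((1 + fps_X) ^ k * yy k) $ N"
      by (simp add: Qp_fps[symmetric])
    also have "\<dots> = 0" by (rule mult_low_zero[of k]) (use that assms in \<open>auto simp: yy_vanish\<close>)
    finally show ?thesis .
  qed
  show "divisible_by_pow L (snd (snd (YO k)))" unfolding yo_def[symmetric]
    by (rule div_cong[OF div_shift[of L "Qp k k" k]]) (simp_all add: cz ev)
  show "snd (snd (YO k)) (1 / t) = - snd (snd (YO k)) t" if "t \<noteq> 0" for t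
    using yo_anti[OF that] by (simp add: yo_def)
qed (simp_all add: YO_def)

lemma part_C2: assumes "L \<ge> 1" "n \<ge> 1"
  shows "cong_mod_I L (YO (2 * n))
          (\<Sum>k\<in>{k. n \<le> k \<and> 2 * k + 1 < L}. smul_loop (coefY n k) (YO (2 * k + 1)))"
proof -
  define S where "S = {k. n \<le> k \<and> 2 * k + 1 < L}"
  define M where "M = max (2*n) L"
  define D where "D = YO (2 * n) - (\<Sum>k\<in>S. smul_loop (coefY n k) (YO (2 * k + 1)))"
  define Q where "Q = Qp M (2*n) - (\<Sum>k\<in>S. smult (coefY n k) (Qp M (2*k+1)))"
  have finS: "finite S" by (rule finite_subset[of _ "{..<L}"]) (auto simp: S_def)
  have kM: "2*k+1 \<le> M" if "k \<in> S" for k using that by (auto simp: S_def M_def)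
  have nM: "2*n \<le> M" by (simp add: M_def)
  have q3: "snd (snd D) t = yo (2*n) t - (\<Sum>k\<in>S. coefY n k * yo (2*k+1) t)" for t
    by (simp add: D_def snd_sum sum_fun_apply smul_loop_def yo_def)
  have ev: "snd (snd D) t = poly Q (t - 1) / t ^ M" if "t \<noteq> 0" for t
  proof -
    have "poly Q (t - 1) / t ^ M = poly (Qp M (2*n)) (t - 1) / t ^ M
        - (\<Sum>k\<in>S. coefY n k * (poly (Qp M (2*k+1)) (t - 1) / t ^ M))"
      by (simp add: Q_def poly_sum diff_divide_distrib sum_divide_distrib)
    also have "\<dots> = yo (2*n) t - (\<Sum>k\<in>S. coefY n k * yo (2*k+1) t)"
      using Qp_eval[OF that nM] Qp_eval[OF that kM] by simp
    finally show ?thesis by (simp add: q3)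
  qed
  have Dz: "(yy (2*n) - (\<Sum>k\<in>S. fps_const (coefY n k) * yy (2*k+1))) $ i = 0" if "i < L" for i
  proof -
    define f where "f k = coefY n k * yy (2*k+1) $ i" for k
    have "yy (2*n) $ i = (\<Sum>j<L. f (n+j))"
      unfolding f_def by (rule coeff_id[OF assms(2)]) (use that in simp)
    also have "\<dots> = (\<Sum>k\<in>(\<lambda>j. n+j) ` {..<L}. f k)"
      by (simp add: sum.reindex)
    also have "\<dots> = (\<Sum>k\<in>S. f k)"
    proof (rule sum.mono_neutral_right)
      show "S \<subseteq> (\<lambda>j. n+j) ` {..<L}"
      proof
        fix k assume "k \<in> S"
        then have "n \<le> k" "k - n < L" by (auto simp: S_def)
        then show "k \<in> (\<lambda>j. n+j) ` {..<L}" by (intro image_eqI[of _ _ "k - n"]) auto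
      qed
      show "\<forall>k\<in>(\<lambda>j. n+j) ` {..<L} - S. f k = 0"
      proof
        fix k assume k: "k \<in> (\<lambda>j. n+j) ` {..<L} - S"
        then have "\<not> 2*k+1 < L" by (auto simp: S_def)
        then have "i < 2*k+1" using that by simp
        then show "f k = 0" by (simp add: f_def yy_vanish)
      qed
    qed simp
    finally show ?thesis by (simp add: fps_sum_nth f_def)
  qed
  have cQ: "coeff Q N = 0" if "N < L" for N
  proof -
    have "fps_of_poly Q = (1 + fps_X) ^ M * (yy (2*n) - (\<Sum>k\<in>S. fps_const (coefY n k) * yy (2*k+1)))"
      using Qp_fps[OF nM] Qp_fps[OF kM]
      by (simp add: Q_def fps_of_poly_diff fps_of_poly_sum fps_of_poly_smult right_diff_distrib
          sum_distrib_left algebra_simps)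
    then have "coeff Q N = ((1 + fps_X) ^ M * (yy (2*n) - (\<Sum>k\<in>S. fps_const (coefY n k) * yy (2*k+1)))) $ N"
      by (metis fps_of_poly_nth)
    also have "\<dots> = 0" by (rule mult_low_zero[of L]) (use Dz that in auto)
    finally show ?thesis .
  qed
  have "D \<in> ideal_I L"
  proof (rule in_ideal)
    show "laurent (snd (snd D))"
      by (rule laurent_cong[OF laurent_shift]) (rule ev)
    show "divisible_by_pow L (snd (snd D))"
      by (rule div_cong[OF div_shift[of L Q M]]) (simp_all add: cQ ev)
    show "snd (snd D) (1 / t) = - snd (snd D) t" if "t \<noteq> 0" for t
      unfolding q3 using yo_anti[OF that] by (simp add: sum_negf[symmetric])
  qed (simp_all add: D_def fst_sum snd_sum sum_fun_apply smul_loop_def YO_def)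
  then show ?thesis unfolding cong_mod_I_def D_def S_def .
qed

theorem proposition3:
  shows "Yu 0 = 0 \<and>
    (\<forall>n\<ge>1. (\<lambda>j. smul_fps (coefY n (n + j)) (Yu (2 * (n + j) + 1))) sums Yu (2 * n)) \<and>
    (\<forall>L\<ge>1. (\<forall>k\<ge>L. cong_mod_I L (YO k) 0) \<and>
       (\<forall>n\<ge>1. cong_mod_I L (YO (2 * n))
          (\<Sum>k\<in>{k. n \<le> k \<and> 2 * k + 1 < L}. smul_loop (coefY n k) (YO (2 * k + 1)))))"
  using part_zero part_sums part_C1 part_C2 by blast

end
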